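(* Consider the optimal clique cover delivery problem for a system with $K$ users and a set $\mathcal{W}$ of subfiles to be delivered. The Size-Aware Coded Multicast (SACM) algorithm, defined as follows, achieves a $(1+\log K)$-approximation to this problem (its output is a set of cliques covering $\mathcal{W}$ whose total size is at most $(1+\log K)$ times the optimal value). SACM: set $\mathscr{C}=\emptyset$, $\mathcal{E}=\mathcal{W}$; while $\mathcal{E}\neq\emptyset$: compute $\mathcal{P}^*=\mathrm{SBO}(\mathcal{E})$, set $\mathscr{C}=\mathscr{C}\cup\{\mathcal{P}^*\}$ and $\mathcal{E}=\mathcal{E}\setminus\mathcal{P}^*$; output $\mathscr{C}$. Here $\mathrm{SBO}(\mathcal{E})$ is computed as: let $\mathcal{M}=\{k\in[K]: W_{k,\mathcal{A}}\in\mathcal{E}\text{ for some }\mathcal{A}\}$ and $\mathscr{T}$ the set of nonempty subsets of $\mathcal{M}$; for each $\mathcal{T}\in\mathscr{T}$ and $j\in\mathcal{T}$ let $\mathcal{L}_{j,\mathcal{T}}=\{W_{j,\mathcal{A}}\in\mathcal{E}:\mathcal{T}\setminus\{j\}\subseteq\mathcal{A}\}$ (replaced by $\{W_*\}$ with $\|W_*\|=\infty$ if empty), let $V_{j,\mathcal{T}}$ be an element of $\mathcal{L}_{j,\mathcal{T}}$ of minimum size (ties arbitrary), and $\mathcal{R}_{\mathcal{T}}=\{V_{j,\mathcal{T}}:j\in\mathcal{T}\}$ with $\|\mathcal{R}_{\mathcal{T}}\|=\max_{j\in\mathcal{T}}\|V_{j,\mathcal{T}}\|$; return a set $\mathcal{R}_{\mathcal{T}}$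 maximizing $|\mathcal{T}|/\|\mathcal{R}_{\mathcal{T}}\|$ over $\mathcal{T}\in\mathscr{T}$ (ties arbitrary).
   Context: Setting: a server and $K$ users, $[K]=\{1,\dots,K\}$; user $k$ requests file $W_k$. For $k\in[K]$ and $\mathcal{A}\subseteq[K]\setminus\{k\}$, $W_{k,\mathcal{A}}$ denotes the subfile of $W_k$ consisting of the bits cached exactly by the users in $\mathcal{A}$, and $\|W_{k,\mathcal{A}}\|$ is its size in bits (arbitrary nonnegative integers). The set of subfiles to be delivered is $\mathcal{W}=\{W_{k,\mathcal{A}}: k\in[K],\ \mathcal{A}\subseteq[K]\setminus\{k\},\ \|W_{k,\mathcal{A}}\|\neq 0\}$. A clique (feasible packet) is a nonempty set $\mathcal{P}\subseteq\mathcal{W}$ of the form $\{W_{k,\mathcal{A}_k}:k\in\mathcal{M}'\}$ for some $\mathcal{M}'\subseteq[K]$ (at most one subfile per user) such that $k\in\mathcal{A}_{k'}$ for all distinct $k,k'\in\mathcal{M}'$; it models sending the bitwise XOR of its subfiles (zero-padded to the longest one). Its size is $\|\mathcal{P}\|=\max_{W\in\mathcal{P}}\|W\|$. The optimal clique cover delivery problem: choose a set of cliques whose union is $\mathcal{W}$ minimizing the sum of their sizes. *)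

theory Defs
  imports Complex_Main "HOL-Library.Extended_Real"
begin

text \<open>Users are [K] = {1..K}. The subfile W_{k,A} is represented by the pair (k, A);
  sz k A is its size in bits.\<close>

type_synonym subfile = "nat \<times> nat set"

definition subfiles :: "nat \<Rightarrow> (nat \<Rightarrow> nat set \<Rightarrow> nat) \<Rightarrow> subfile set" where
  "subfiles K sz = {(k, A). k \<in> {1..K} \<and> A \<subseteq> {1..K} - {k} \<and> sz k A \<noteq> 0}"

definition is_clique :: "nat \<Rightarrow> (nat \<Rightarrow> nat set \<Rightarrow> nat) \<Rightarrow> subfile set \<Rightarrow> bool" where
  "is_clique K sz P \<longleftrightarrow> P \<noteq> {} \<and> P \<subseteq> subfiles K sz \<and> inj_on fst P \<and>
     (\<forall>(k, A)\<in>P. \<forall>(k', A')\<in>P. k \<noteq> k' \<longrightarrow> k \<in> A')"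

definition clique_size :: "(nat \<Rightarrow> nat set \<Rightarrow> nat) \<Rightarrow> subfile set \<Rightarrow> nat" where
  "clique_size sz P = Max ((\<lambda>(k, A). sz k A) ` P)"

definition is_clique_cover :: "nat \<Rightarrow> (nat \<Rightarrow> nat set \<Rightarrow> nat) \<Rightarrow> subfile set set \<Rightarrow> bool" where
  "is_clique_cover K sz C \<longleftrightarrow> (\<forall>P\<in>C. is_clique K sz P) \<and> \<Union>C = subfiles K sz"

definition cover_cost :: "(nat \<Rightarrow> nat set \<Rightarrow> nat) \<Rightarrow> subfile set set \<Rightarrow> nat" where
  "cover_cost sz C = (\<Sum>P\<in>C. clique_size sz P)"

definition sbo_M :: "nat \<Rightarrow> subfile set \<Rightarrow> nat set" where
  "sbo_M K E = {k \<in> {1..K}. \<exists>A. (k, A) \<in> E}"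

definition sbo_L :: "subfile set \<Rightarrow> nat \<Rightarrow> nat set \<Rightarrow> subfile set" where
  "sbo_L E j T = {(k, A) \<in> E. k = j \<and> T - {j} \<subseteq> A}"

text \<open>Size of V_{j,T}: the minimum size in L_{j,T}, or infinity (the dummy W_* ) if empty.\<close>
definition sbo_Vsize :: "(nat \<Rightarrow> nat set \<Rightarrow> nat) \<Rightarrow> subfile set \<Rightarrow> nat \<Rightarrow> nat set \<Rightarrow> ereal" where
  "sbo_Vsize sz E j T =
     (if sbo_L E j T = {} then \<infinity> else ereal (Min ((\<lambda>(k, A). sz k A) ` sbo_L E j T)))"

definition sbo_Rsize :: "(nat \<Rightarrow> nat set \<Rightarrow> nat) \<Rightarrow> subfile set \<Rightarrow> nat set \<Rightarrow> ereal" where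
  "sbo_Rsize sz E T = Max ((\<lambda>j. sbo_Vsize sz E j T) ` T)"

definition sbo_ratio :: "(nat \<Rightarrow> nat set \<Rightarrow> nat) \<Rightarrow> subfile set \<Rightarrow> nat set \<Rightarrow> ereal" where
  "sbo_ratio sz E T = ereal (real (card T)) / sbo_Rsize sz E T"

text \<open>P is a possible output of SBO(E) (for some resolution of the ties).\<close>
definition sbo_output :: "nat \<Rightarrow> (nat \<Rightarrow> nat set \<Rightarrow> nat) \<Rightarrow> subfile set \<Rightarrow> subfile set \<Rightarrow> bool" where
  "sbo_output K sz E P \<longleftrightarrow>
     (\<exists>T V. T \<subseteq> sbo_M K E \<and> T \<noteq> {} \<and>
        (\<forall>T'. T' \<subseteq> sbo_M K E \<and> T' \<noteq> {} \<longrightarrow> sbo_ratio sz E T' \<le> sbo_ratio sz E T) \<and>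
        (\<forall>j\<in>T. V j \<in> sbo_L E j T \<and>
                 (\<forall>w\<in>sbo_L E j T. (case V j of (k, A) \<Rightarrow> sz k A) \<le> (case w of (k, A) \<Rightarrow> sz k A))) \<and>
        P = V ` T)"

text \<open>sacm_run K sz E C: running the SACM loop from the remaining set E
  (with the current clique collection empty) can produce the output C.\<close>
inductive sacm_run :: "nat \<Rightarrow> (nat \<Rightarrow> nat set \<Rightarrow> nat) \<Rightarrow> subfile set \<Rightarrow> subfile set set \<Rightarrow> bool"
  for K sz where
  finish: "sacm_run K sz {} {}"
| step: "E \<noteq> {} \<Longrightarrow> sbo_output K sz E P \<Longrightarrow> sacm_run K sz (E - P) C
          \<Longrightarrow> sacm_run K sz E (insert P C)"

end

theory Submission
  imports Defs
begin

definition Hn :: "nat \<Rightarrow> real" where "Hn n = (\<Sum>k=1..n. 1 / real k)"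

lemma Hn_Suc: "Hn (Suc n) = Hn n + 1 / real (Suc n)"
  by (simp add: Hn_def)

lemma Hn_nonneg: "Hn n \<ge> 0"
  unfolding Hn_def by (rule sum_nonneg) auto

lemma Hn_mono: "m \<le> n \<Longrightarrow> Hn m \<le> Hn n"
  unfolding Hn_def by (rule sum_mono2) auto

lemma Hn_le_ln: "n \<ge> 1 \<Longrightarrow> Hn n \<le> 1 + ln (real n)"
proof (induction n rule: dec_induct)
  case base then show ?case by (simp add: Hn_def)
next
  case (step n)
  have "ln (real n / real (Suc n)) \<le> real n / real (Suc n) - 1"
    using step.hyps by (intro ln_le_minus_one) auto
  also have "real n / real (Suc n) - 1 = - (1 / real (Suc n))" by (simp add: field_simps)
  finally have "1 / real (Suc n) \<le> ln (real (Suc n)) - ln (real n)"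
    using step.hyps by (simp add: ln_div)
  then show ?case using step.IH by (simp add: Hn_Suc)
qed

lemma Hn_diff: "m \<le> n \<Longrightarrow> real m / real n \<le> Hn n - Hn (n - m)"
proof (induction m)
  case 0 then show ?case by simp
next
  case (Suc m)
  then have "n - m = Suc (n - Suc m)" by auto
  then have "Hn (n - m) = Hn (n - Suc m) + 1 / real (n - m)" by (simp add: Hn_Suc)
  moreover have "1 / real n \<le> 1 / real (n - m)" using Suc.prems by (intro divide_left_mono) auto
  moreover have "real m / real n \<le> Hn n - Hn (n - m)" using Suc by auto
  moreover have "real (Suc m) / real n = real m / real n + 1 / real n"
    by (simp add: add_divide_distrib)
  ultimately have "real m / real n + 1 / real n \<le> (Hn n - Hn (n - m)) + 1 / real (n - m)"
    by (intro add_mono) auto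
  also have "\<dots> = Hn n - Hn (n - Suc m)" using \<open>Hn (n - m) = _\<close> by simp
  finally show ?case by (simp only: \<open>real (Suc m) / real n = real m / real n + 1 / real n\<close>)
qed

lemma finite_subfiles: "finite (subfiles K sz)"
proof -
  have "subfiles K sz \<subseteq> {1..K} \<times> Pow {1..K}" unfolding subfiles_def by auto
  then show ?thesis by (rule finite_subset) auto
qed

lemma subfiles_pos: "x \<in> subfiles K sz \<Longrightarrow> case_prod sz x > 0"
  unfolding subfiles_def by auto


definition cliq :: "subfile set \<Rightarrow> bool" where
  "cliq Q \<longleftrightarrow> inj_on fst Q \<and> (\<forall>(k, A)\<in>Q. \<forall>(k', A')\<in>Q. k \<noteq> k' \<longrightarrow> k \<in> A')"

lemma sbo_props:
  assumes E: "E \<subseteq> subfiles K sz" and out: "sbo_output K sz E P"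
  shows "P \<subseteq> E \<and> P \<noteq> {} \<and> is_clique K sz P \<and>
    (\<forall>Q s. Q \<subseteq> E \<longrightarrow> Q \<noteq> {} \<longrightarrow> cliq Q \<longrightarrow> (\<forall>q\<in>Q. case_prod sz q \<le> s) \<longrightarrow>
        real (card Q) * real (clique_size sz P) \<le> real (card P) * real s)"
proof -
  obtain T V where T: "T \<subseteq> sbo_M K E" "T \<noteq> {}"
    and opt: "\<And>T'. T' \<subseteq> sbo_M K E \<Longrightarrow> T' \<noteq> {} \<Longrightarrow> sbo_ratio sz E T' \<le> sbo_ratio sz E T"
    and V: "\<And>j. j \<in> T \<Longrightarrow> V j \<in> sbo_L E j T"
    and Vmin: "\<And>j w. j \<in> T \<Longrightarrow> w \<in> sbo_L E j T \<Longrightarrow> case_prod sz (V j) \<le> case_prod sz w"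
    and P: "P = V ` T"
    using out unfolding sbo_output_def by blast
  have finE: "finite E" using E finite_subfiles finite_subset by blast
  have finM: "finite (sbo_M K E)" unfolding sbo_M_def by auto
  have finT: "finite T" using T(1) finM finite_subset by blast
  have finL: "\<And>j T. finite (sbo_L E j T)" using finE unfolding sbo_L_def
    by (rule rev_finite_subset) auto
  have Vp: "V j \<in> E \<and> fst (V j) = j \<and> T - {j} \<subseteq> snd (V j)" if j: "j \<in> T" for j
    using V[OF j] by (cases "V j") (auto simp: sbo_L_def)
  have fstV: "\<And>j. j \<in> T \<Longrightarrow> fst (V j) = j" using Vp by blast
  have sndV: "\<And>j. j \<in> T \<Longrightarrow> T - {j} \<subseteq> snd (V j)" using Vp by blast
  have VE: "\<And>j. j \<in> T \<Longrightarrow> V j \<in> E" using Vp by blast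
  have PE: "P \<subseteq> E" using VE P by auto
  have Pne: "P \<noteq> {}" using T(2) P by auto
  have injV: "inj_on V T" using fstV by (metis inj_onI)
  have cardP: "card P = card T" using P injV card_image by blast
  have finP: "finite P" using P finT by simp
  have injP: "inj_on fst P" using fstV P by (auto simp: inj_on_def)
  have clP: "is_clique K sz P"
    unfolding is_clique_def
  proof (intro conjI)
    show "\<forall>(k, A)\<in>P. \<forall>(k', A')\<in>P. k \<noteq> k' \<longrightarrow> k \<in> A'"
    proof (clarify)
      fix k A k' A' assume a: "(k, A) \<in> P" "(k', A') \<in> P" "k \<noteq> k'"
      then obtain j j' where jj: "j \<in> T" "j' \<in> T" "(k, A) = V j" "(k', A') = V j'" using P by auto
      then have "k = j" "k' = j'" "T - {j'} \<subseteq> A'" using fstV sndV by (metis fst_conv snd_conv)+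
      then show "k \<in> A'" using a(3) jj(1) by auto
    qed
  qed (use PE E Pne injP in auto)
  have pos: "\<And>x. x \<in> E \<Longrightarrow> case_prod sz x > 0" using E subfiles_pos by blast
  have csP_pos: "clique_size sz P > 0"
  proof -
    obtain x where "x \<in> P" using Pne by auto
    then have "case_prod sz x \<le> clique_size sz P" unfolding clique_size_def
      using finP by (intro Max_ge) auto
    then show ?thesis using pos[of x] \<open>x \<in> P\<close> PE by auto
  qed
  have VsT: "\<And>j. j \<in> T \<Longrightarrow> sbo_Vsize sz E j T = ereal (case_prod sz (V j))"
  proof -
    fix j assume j: "j \<in> T"
    have "Min (case_prod sz ` sbo_L E j T) = case_prod sz (V j)"
      using V[OF j] Vmin[OF j] finL by (intro Min_eqI) auto
    then show "sbo_Vsize sz E j T = ereal (case_prod sz (V j))"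
      unfolding sbo_Vsize_def using V[OF j] by auto
  qed
  have RsT: "sbo_Rsize sz E T = ereal (real (clique_size sz P))"
  proof -
    have "sbo_Rsize sz E T = Max ((\<lambda>x. ereal (real x)) ` (case_prod sz ` P))"
      unfolding sbo_Rsize_def P using VsT by (simp add: image_image cong: image_cong)
    also have "\<dots> = ereal (real (Max (case_prod sz ` P)))"
      using finP Pne by (intro mono_Max_commute[symmetric]) (auto simp: mono_def)
    finally show ?thesis unfolding clique_size_def .
  qed
  have ratT: "sbo_ratio sz E T = ereal (real (card T) / real (clique_size sz P))"
    unfolding sbo_ratio_def RsT using csP_pos by simp
  have greedy: "real (card Q) * real (clique_size sz P) \<le> real (card P) * real s"
    if Q: "Q \<subseteq> E" "Q \<noteq> {}" "cliq Q" "\<forall>q\<in>Q. case_prod sz q \<le> s" for Q s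
  proof -
    define T' where "T' = fst ` Q"
    have finQ: "finite Q" using Q(1) finE finite_subset by blast
    have finT': "finite T'" using finQ T'_def by simp
    have injQ: "inj_on fst Q" using Q(3) unfolding cliq_def by auto
    have pw: "\<And>k A k' A'. (k, A) \<in> Q \<Longrightarrow> (k', A') \<in> Q \<Longrightarrow> k \<noteq> k' \<Longrightarrow> k \<in> A'"
      using Q(3) unfolding cliq_def by fast
    have cardT': "card T' = card Q" unfolding T'_def using injQ card_image by blast
    have T'M: "T' \<subseteq> sbo_M K E" unfolding T'_def sbo_M_def using Q(1) E
      by (force simp: subfiles_def)
    have T'ne: "T' \<noteq> {}" using Q(2) T'_def by auto
    have spos: "s > 0"
    proof -
      obtain q where "q \<in> Q" using Q(2) by auto
      then show ?thesis using pos[of q] Q by force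
    qed
    have Vs: "ereal 1 \<le> sbo_Vsize sz E j T' \<and> sbo_Vsize sz E j T' \<le> ereal (real s)"
      if j: "j \<in> T'" for j
    proof -
      obtain A where qA: "(j, A) \<in> Q" using j T'_def by auto
      have inL: "(j, A) \<in> sbo_L E j T'"
        unfolding sbo_L_def using qA Q(1) pw unfolding T'_def by force
      have ne: "sbo_L E j T' \<noteq> {}" using inL by auto
      have "Min (case_prod sz ` sbo_L E j T') \<le> sz j A"
        using inL finL by (intro Min_le) force+
      moreover have "sz j A \<le> s" using Q(4) qA by auto
      moreover have "1 \<le> Min (case_prod sz ` sbo_L E j T')"
        using ne finL pos unfolding sbo_L_def
        by (subst Min_ge_iff) (auto simp: Suc_le_eq)
      ultimately show ?thesis unfolding sbo_Vsize_def using ne by auto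
    qed
    have R1: "sbo_Rsize sz E T' \<le> ereal (real s)"
      unfolding sbo_Rsize_def using finT' T'ne Vs by (subst Max_le_iff) auto
    have R2: "ereal 1 \<le> sbo_Rsize sz E T'"
    proof -
      obtain j where j: "j \<in> T'" using T'ne by auto
      have "sbo_Vsize sz E j T' \<le> sbo_Rsize sz E T'"
        unfolding sbo_Rsize_def using finT' j by (intro Max_ge) auto
      then show ?thesis using Vs[OF j] by auto
    qed
    obtain r where r: "sbo_Rsize sz E T' = ereal r" using R1 R2
      by (cases "sbo_Rsize sz E T'") auto
    have r1: "1 \<le> r" and r2: "r \<le> real s" using R1 R2 r by auto
    have "ereal (real (card T') / r) \<le> ereal (real (card T) / real (clique_size sz P))"
      using opt[OF T'M T'ne] r r1 ratT unfolding sbo_ratio_def by simp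
    then have a: "real (card T') / r \<le> real (card T) / real (clique_size sz P)" by simp
    have b: "real (card T') / real s \<le> real (card T') / r"
      using r1 r2 by (intro divide_left_mono) auto
    have "real (card Q) / real s \<le> real (card P) / real (clique_size sz P)"
      using a b cardT' cardP by simp
    then show ?thesis using spos csP_pos by (simp add: field_simps)
  qed
  show ?thesis using PE Pne clP greedy by blast
qed


lemma cover_props:
  assumes "is_clique_cover K sz C'"
  shows "finite C'" "\<And>Q. Q \<in> C' \<Longrightarrow> Q \<subseteq> subfiles K sz \<and> cliq Q \<and> finite Q"
    "\<Union>C' = subfiles K sz"
proof -
  have cl: "\<And>Q. Q \<in> C' \<Longrightarrow> is_clique K sz Q" using assms unfolding is_clique_cover_def by blast
  have sub: "C' \<subseteq> Pow (subfiles K sz)" using cl unfolding is_clique_def by blast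
  have "finite (Pow (subfiles K sz))" using finite_subfiles by simp
  then show "finite C'" using sub by (rule rev_finite_subset)
  show "\<Union>C' = subfiles K sz" using assms unfolding is_clique_cover_def by blast
  fix Q assume Q: "Q \<in> C'"
  have a: "Q \<subseteq> subfiles K sz" using cl[OF Q] unfolding is_clique_def by blast
  have b: "cliq Q" using cl[OF Q] unfolding is_clique_def cliq_def by blast
  have c: "finite Q" using a finite_subfiles by (rule finite_subset)
  show "Q \<subseteq> subfiles K sz \<and> cliq Q \<and> finite Q" using a b c by blast
qed

lemma step_ineq:
  fixes n m p :: nat and cP cQ :: real
  assumes "m \<le> n" "0 < n" "0 < p" "real n * cP \<le> real p * cQ" "0 \<le> cP"
  shows "cP * real m / real p \<le> cQ * (Hn n - Hn (n - m))"
proof -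
  have "cP * real m / real p = (real n * cP) * real m / (real p * real n)" using assms by (simp add: field_simps)
  also have "\<dots> \<le> (real p * cQ) * real m / (real p * real n)"
    using assms by (intro divide_right_mono mult_right_mono) auto
  also have "\<dots> = cQ * (real m / real n)" using assms by (simp add: field_simps)
  also have "\<dots> \<le> cQ * (Hn n - Hn (n - m))"
  proof -
    have "0 \<le> cQ"
    proof -
      have "0 \<le> real n * cP" using assms by simp
      then have "0 \<le> real p * cQ" using assms by linarith
      then show ?thesis using assms zero_le_mult_iff by (metis of_nat_0_less_iff not_less)
    qed
    then show ?thesis using Hn_diff[OF assms(1)] by (intro mult_left_mono) auto
  qed
  finally show ?thesis .
qed

lemma run_bound:
  assumes "sacm_run K sz E C" and cov: "is_clique_cover K sz C'"
  shows "E \<subseteq> subfiles K sz \<longrightarrow> (\<forall>P\<in>C. is_clique K sz P \<and> P \<subseteq> E) \<and> \<Union>C = E \<and> finite C \<and>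
     real (cover_cost sz C) \<le> (\<Sum>Q\<in>C'. real (clique_size sz Q) * Hn (card (Q \<inter> E)))"
  using assms(1)
proof (induction rule: sacm_run.induct)
  case finish
  then show ?case by (auto simp: cover_cost_def intro!: sum_nonneg mult_nonneg_nonneg Hn_nonneg)
next
  case (step E P C)
  show ?case
  proof
  assume Esub: "E \<subseteq> subfiles K sz"
  note cp = cover_props[OF cov]
  have sp: "P \<subseteq> E" "P \<noteq> {}" "is_clique K sz P"
    and gr: "\<And>Q s. Q \<subseteq> E \<Longrightarrow> Q \<noteq> {} \<Longrightarrow> cliq Q \<Longrightarrow> (\<forall>q\<in>Q. case_prod sz q \<le> s) \<Longrightarrow>
        real (card Q) * real (clique_size sz P) \<le> real (card P) * real s"
    using sbo_props[OF Esub step.hyps(2)] by blast+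
  have IH: "(\<forall>X\<in>C. is_clique K sz X \<and> X \<subseteq> E - P) \<and> \<Union>C = E - P \<and> finite C \<and>
     real (cover_cost sz C) \<le> (\<Sum>Q\<in>C'. real (clique_size sz Q) * Hn (card (Q \<inter> (E - P))))"
  proof -
    have "E - P \<subseteq> subfiles K sz" using Esub by blast
    then show ?thesis by (rule mp[OF step.IH])
  qed
  note i1 = IH[THEN conjunct1] and i2 = IH[THEN conjunct2, THEN conjunct1]
    and i3 = IH[THEN conjunct2, THEN conjunct2, THEN conjunct1]
    and i4 = IH[THEN conjunct2, THEN conjunct2, THEN conjunct2]
  have finE: "finite E" using Esub finite_subfiles finite_subset by blast
  have finP: "finite P" using sp(1) finE finite_subset by blast
  have Csub: "\<And>X. X \<in> C \<Longrightarrow> X \<subseteq> E - P" using i1 by blast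
  have PnC: "P \<notin> C"
  proof
    assume "P \<in> C"
    then have "P \<subseteq> E - P" by (rule Csub)
    then show False using sp(2) by auto
  qed
  have cost: "cover_cost sz (insert P C) = clique_size sz P + cover_cost sz C"
    unfolding cover_cost_def using i3 PnC by simp
  define cP where "cP = real (clique_size sz P)"
  have cP0: "0 \<le> cP" unfolding cP_def by simp
  have trm: "cP * real (card (Q \<inter> P)) / real (card P) \<le>
      real (clique_size sz Q) * (Hn (card (Q \<inter> E)) - Hn (card (Q \<inter> (E - P))))"
    if Q: "Q \<in> C'" for Q
  proof -
    have QQ: "Q \<subseteq> subfiles K sz" "cliq Q" "finite Q" using cp(2)[OF Q] by auto
    have sub: "Q \<inter> P \<subseteq> Q \<inter> E" using sp by auto
    have eq: "Q \<inter> (E - P) = (Q \<inter> E) - (Q \<inter> P)" by auto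
    have c: "card (Q \<inter> (E - P)) = card (Q \<inter> E) - card (Q \<inter> P)"
      unfolding eq using sub QQ(3) by (simp add: card_Diff_subset)
    have m: "card (Q \<inter> P) \<le> card (Q \<inter> E)" using sub QQ(3) by (simp add: card_mono)
    show ?thesis
    proof (cases "Q \<inter> E = {}")
      case True
      then have "Q \<inter> P = {}" using sub by auto
      then show ?thesis using True c by simp
    next
      case False
      have cl: "cliq (Q \<inter> E)" using QQ(2) unfolding cliq_def by (auto intro: inj_on_subset)
      have le: "\<forall>q\<in>Q \<inter> E. case_prod sz q \<le> clique_size sz Q"
        unfolding clique_size_def using QQ(3) by (auto intro!: Max_ge)
      have g: "real (card (Q \<inter> E)) * cP \<le> real (card P) * real (clique_size sz Q)"
        using gr[OF _ False cl le] unfolding cP_def by auto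
      have n0: "0 < card (Q \<inter> E)" using False QQ(3) by (simp add: card_gt_0_iff)
      have p0: "0 < card P" using sp finP by (simp add: card_gt_0_iff)
      show ?thesis unfolding c using step_ineq[OF m n0 p0 g cP0] .
    qed
  qed
  have "cP = cP * real (card P) / real (card P)"
    using sp finP by (simp add: card_gt_0_iff)
  also have "\<dots> \<le> cP * real (\<Sum>Q\<in>C'. card (Q \<inter> P)) / real (card P)"
  proof -
    have "P = (\<Union>Q\<in>C'. Q \<inter> P)" using cp(3) sp Esub by auto
    then have "card P \<le> (\<Sum>Q\<in>C'. card (Q \<inter> P))" using card_UN_le[OF cp(1)] by metis
    then have "real (card P) \<le> real (\<Sum>Q\<in>C'. card (Q \<inter> P))" by (simp only: of_nat_le_iff)
    then show ?thesis using cP0 by (intro divide_right_mono mult_left_mono) auto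
  qed
  also have "\<dots> = (\<Sum>Q\<in>C'. cP * real (card (Q \<inter> P)) / real (card P))"
    by (simp add: sum_distrib_left sum_divide_distrib)
  also have "\<dots> \<le> (\<Sum>Q\<in>C'. real (clique_size sz Q) * (Hn (card (Q \<inter> E)) - Hn (card (Q \<inter> (E - P)))))"
    using trm by (rule sum_mono)
  also have "\<dots> = (\<Sum>Q\<in>C'. real (clique_size sz Q) * Hn (card (Q \<inter> E)))
      - (\<Sum>Q\<in>C'. real (clique_size sz Q) * Hn (card (Q \<inter> (E - P))))"
    by (simp add: right_diff_distrib sum_subtractf)
  finally have key: "cP \<le> \<dots>" .
  have "real (cover_cost sz (insert P C)) = cP + real (cover_cost sz C)"
    unfolding cost cP_def by simp
  also have "\<dots> \<le> (\<Sum>Q\<in>C'. real (clique_size sz Q) * Hn (card (Q \<inter> E)))"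
    using key i4 by linarith
  finally have costb: "real (cover_cost sz (insert P C)) \<le> \<dots>" .
  show "(\<forall>X\<in>insert P C. is_clique K sz X \<and> X \<subseteq> E) \<and> \<Union>(insert P C) = E \<and> finite (insert P C) \<and>
     real (cover_cost sz (insert P C)) \<le> (\<Sum>Q\<in>C'. real (clique_size sz Q) * Hn (card (Q \<inter> E)))"
  proof (intro conjI)
    show "\<forall>X\<in>insert P C. is_clique K sz X \<and> X \<subseteq> E" using i1 sp(1,3) by blast
    show "\<Union>(insert P C) = E" using i2 sp(1) by blast
    show "finite (insert P C)" using i3 by simp
  qed (rule costb)
  qed
qed


lemma sbo_exists:
  assumes E: "E \<subseteq> subfiles K sz" and ne: "E \<noteq> {}"
  shows "\<exists>P. sbo_output K sz E P"
proof -
  define M where "M = sbo_M K E"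
  define F where "F = {T. T \<subseteq> M \<and> T \<noteq> {}}"
  have finE: "finite E" using E finite_subfiles finite_subset by blast
  have finM: "finite M" unfolding M_def sbo_M_def by auto
  have finL: "\<And>j T. finite (sbo_L E j T)" using finE unfolding sbo_L_def
    by (rule rev_finite_subset) auto
  have pos: "\<And>x. x \<in> E \<Longrightarrow> case_prod sz x > 0" using E subfiles_pos by blast
  obtain x0 where x0: "x0 \<in> E" using ne by auto
  obtain j0 A0 where jA: "x0 = (j0, A0)" by (cases x0)
  have j0M: "j0 \<in> M" unfolding M_def sbo_M_def using x0 jA E by (auto simp: subfiles_def)
  have finF: "finite F" unfolding F_def using finM by auto
  have Fne: "F \<noteq> {}" unfolding F_def using j0M by auto
  define m where "m = Max (sbo_ratio sz E ` F)"
  have "m \<in> sbo_ratio sz E ` F" unfolding m_def using finF Fne by (intro Max_in) auto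
  then obtain T where TF: "T \<in> F" and Tm: "sbo_ratio sz E T = m" by auto
  have opt: "\<And>T'. T' \<in> F \<Longrightarrow> sbo_ratio sz E T' \<le> sbo_ratio sz E T"
    unfolding Tm m_def using finF by (intro Max_ge) auto
  have j0F: "{j0} \<in> F" unfolding F_def using j0M by auto
  have r0: "0 < sbo_ratio sz E {j0}"
  proof -
    have Lne: "sbo_L E j0 {j0} \<noteq> {}" using x0 jA unfolding sbo_L_def by auto
    have fin0: "finite (case_prod sz ` sbo_L E j0 {j0})" using finL by blast
    have all1: "\<forall>a\<in>case_prod sz ` sbo_L E j0 {j0}. 1 \<le> a"
      using pos by (auto simp: sbo_L_def Suc_le_eq)
    have "1 \<le> Min (case_prod sz ` sbo_L E j0 {j0})"
      using Min_ge_iff[OF fin0] Lne all1 by blast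
    then show ?thesis unfolding sbo_ratio_def sbo_Rsize_def sbo_Vsize_def using Lne by auto
  qed
  have finT: "finite T" using TF finM unfolding F_def by (auto intro: finite_subset)
  have Lne: "sbo_L E j T \<noteq> {}" if j: "j \<in> T" for j
  proof
    assume e: "sbo_L E j T = {}"
    have "sbo_Vsize sz E j T \<le> sbo_Rsize sz E T"
      unfolding sbo_Rsize_def using finT j by (intro Max_ge) auto
    then have "sbo_Rsize sz E T = \<infinity>" using e unfolding sbo_Vsize_def by auto
    then have "sbo_ratio sz E T = 0" unfolding sbo_ratio_def by simp
    then show False using r0 opt[OF j0F] by auto
  qed
  have ex: "\<forall>j\<in>T. \<exists>v. v \<in> sbo_L E j T \<and> (\<forall>w\<in>sbo_L E j T. case_prod sz v \<le> case_prod sz w)"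
  proof
    fix j assume j: "j \<in> T"
    have "Min (case_prod sz ` sbo_L E j T) \<in> case_prod sz ` sbo_L E j T"
      using Lne[OF j] finL by (intro Min_in) auto
    then obtain v where v: "v \<in> sbo_L E j T" "case_prod sz v = Min (case_prod sz ` sbo_L E j T)" by auto
    then show "\<exists>v. v \<in> sbo_L E j T \<and> (\<forall>w\<in>sbo_L E j T. case_prod sz v \<le> case_prod sz w)"
      using finL by (intro exI[of _ v]) auto
  qed
  obtain V where V: "\<forall>j\<in>T. V j \<in> sbo_L E j T \<and> (\<forall>w\<in>sbo_L E j T. case_prod sz (V j) \<le> case_prod sz w)"
    using bchoice[OF ex] by blast
  have TM: "T \<subseteq> sbo_M K E" "T \<noteq> {}" using TF unfolding F_def M_def by auto
  have opt': "\<forall>T'. T' \<subseteq> sbo_M K E \<and> T' \<noteq> {} \<longrightarrow> sbo_ratio sz E T' \<le> sbo_ratio sz E T"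
    using opt unfolding F_def M_def by blast
  have "sbo_output K sz E (V ` T)"
    unfolding sbo_output_def
    by (rule exI[of _ T], rule exI[of _ V]) (use TM opt' V in blast)
  then show ?thesis by blast
qed

lemma run_exists:
  assumes "E \<subseteq> subfiles K sz"
  shows "\<exists>C. sacm_run K sz E C"
proof -
  have "finite E" using assms finite_subfiles finite_subset by blast
  then show ?thesis using assms
  proof (induction E rule: finite_psubset_induct)
    case (psubset E)
    show ?case
    proof (cases "E = {}")
      case True
      then show ?thesis using sacm_run.finish by blast
    next
      case False
      obtain P where P: "sbo_output K sz E P" using sbo_exists[OF psubset.prems False] by blast
      have "P \<subseteq> E" "P \<noteq> {}" using sbo_props[OF psubset.prems P] by auto
      then have "E - P \<subset> E" by auto
      then obtain C where "sacm_run K sz (E - P) C" using psubset.IH psubset.prems by blast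
      then show ?thesis using sacm_run.step[OF False P] by blast
    qed
  qed
qed

theorem theorem2:
  fixes K :: nat and sz :: "nat \<Rightarrow> nat set \<Rightarrow> nat"
  assumes "K \<ge> 1"
  shows "(\<exists>C. sacm_run K sz (subfiles K sz) C) \<and>
         (\<forall>C. sacm_run K sz (subfiles K sz) C \<longrightarrow>
            is_clique_cover K sz C \<and>
            (\<forall>C'. is_clique_cover K sz C' \<longrightarrow>
               real (cover_cost sz C) \<le> (1 + ln (real K)) * real (cover_cost sz C')))"
proof (intro conjI allI impI)
  show "\<exists>C. sacm_run K sz (subfiles K sz) C" by (rule run_exists) simp
next
  fix C assume run: "sacm_run K sz (subfiles K sz) C"
  have "is_clique_cover K sz ((\<lambda>x. {x}) ` subfiles K sz)"
    unfolding is_clique_cover_def is_clique_def by auto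
  from run_bound[OF run this, THEN mp, OF order_refl]
  have h1: "\<forall>P\<in>C. is_clique K sz P \<and> P \<subseteq> subfiles K sz" and h2: "\<Union>C = subfiles K sz"
    by blast+
  show "is_clique_cover K sz C" unfolding is_clique_cover_def using h1 h2 by simp
next
  fix C C' assume run: "sacm_run K sz (subfiles K sz) C" and cov: "is_clique_cover K sz C'"
  note rb = run_bound[OF run cov, THEN mp, OF order_refl]
  note cp = cover_props[OF cov]
  have "real (cover_cost sz C) \<le> (\<Sum>Q\<in>C'. real (clique_size sz Q) * Hn (card (Q \<inter> subfiles K sz)))"
    using rb by blast
  also have "\<dots> \<le> (\<Sum>Q\<in>C'. real (clique_size sz Q) * (1 + ln (real K)))"
  proof (rule sum_mono)
    fix Q assume Q: "Q \<in> C'"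
    have QQ: "Q \<subseteq> subfiles K sz" "cliq Q" "finite Q" using cp(2)[OF Q] by auto
    have "card Q = card (fst ` Q)" using QQ(2) unfolding cliq_def by (simp add: card_image)
    also have "\<dots> \<le> card {1..K}" using QQ(1) by (intro card_mono) (auto simp: subfiles_def)
    finally have "card Q \<le> K" by simp
    then have "Hn (card (Q \<inter> subfiles K sz)) \<le> 1 + ln (real K)"
    proof -
      have "Q \<inter> subfiles K sz = Q" using QQ(1) by auto
      then show ?thesis using Hn_mono[OF \<open>card Q \<le> K\<close>] Hn_le_ln[OF assms] by simp
    qed
    then show "real (clique_size sz Q) * Hn (card (Q \<inter> subfiles K sz))
        \<le> real (clique_size sz Q) * (1 + ln (real K))" by (intro mult_left_mono) auto
  qed
  also have "\<dots> = (1 + ln (real K)) * real (cover_cost sz C')"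
    unfolding cover_cost_def by (simp add: sum_distrib_left mult.commute)
  finally show "real (cover_cost sz C) \<le> (1 + ln (real K)) * real (cover_cost sz C')" .
qed

end
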